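(* Let $w=w_0w_1w_2\ldots$ be a one-sided infinite word over a finite alphabet $\mathcal A=\{a_1,\dots,a_k\}$ and fix $1\le j\le k$ such that $a_j$ occurs infinitely often in $w$. Suppose there is $m\in\mathbb{N}$ such that the integer sequence $(b_n)_{n\ge1}$ defined by \[\sum_{n=1}^\infty b_nX^n=(1-X)^m\sum_{n=1}^\infty p_j(n)X^n\] takes only finitely many values. Then $P_{a_j}(X)\in\mathbb{Q}(X)$ if $(b_n)$ is eventually periodic, and $P_{a_j}(X)$ is transcendental over $\mathbb{Q}(X)$ if $(b_n)$ is not eventually periodic.
   Context: Positions in $w$ are indexed starting from $0$. For $n\ge1$, $p_j(n)$ denotes the position of the $n$-th occurrence of $a_j$ in $w$, and $P_{a_j}(X)=\sum_{n\ge1}p_j(n)X^n$. A sequence is eventually periodic if there exist $N$, $d\ge1$ with $s_{n+d}=s_n$ for all $n\ge N$. Transcendence over $\mathbb{Q}(X)$ is meant inside $\mathbb{C}((X))$. *)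

theory Defs
  imports "HOL-Computational_Algebra.Computational_Algebra"
begin

text \<open>Position (0-indexed) of the n-th occurrence (n \<ge> 1) of letter a in the
  infinite word w: the unique position i with w i = a preceded by exactly n-1
  occurrences of a.\<close>
definition occ_pos :: "(nat \<Rightarrow> 'a) \<Rightarrow> 'a \<Rightarrow> nat \<Rightarrow> nat" where
  "occ_pos w a n = (THE i. w i = a \<and> card {k. k < i \<and> w k = a} = n - 1)"

definition occ_series :: "(nat \<Rightarrow> 'a) \<Rightarrow> 'a \<Rightarrow> rat fps" where
  "occ_series w a = Abs_fps (\<lambda>n. if n = 0 then 0 else of_nat (occ_pos w a n))"

definition eventually_periodic :: "(nat \<Rightarrow> 'b) \<Rightarrow> bool" where
  "eventually_periodic s \<longleftrightarrow> (\<exists>N d. d \<ge> 1 \<and> (\<forall>n\<ge>N. s (n + d) = s n))"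

definition rational_fps :: "rat fps \<Rightarrow> bool" where
  "rational_fps f \<longleftrightarrow> (\<exists>p q :: rat poly. q \<noteq> 0 \<and> fps_of_poly q * f = fps_of_poly p)"

text \<open>Transcendental over Q(X): no nonzero polynomial with coefficients in Q[X]
  (equivalently, after clearing denominators, in Q(X)) vanishes at f.\<close>
definition transcendental_fps :: "rat fps \<Rightarrow> bool" where
  "transcendental_fps f \<longleftrightarrow>
     \<not> (\<exists>Q :: rat poly poly. Q \<noteq> 0 \<and> poly (map_poly fps_of_poly Q) f = 0)"

end

theory Submission
  imports Defs
begin


definition pev :: "rat poly poly \<Rightarrow> rat fps \<Rightarrow> rat fps" where
  "pev R x = poly (map_poly fps_of_poly R) x"

lemma pev_pCons[simp]: "pev (pCons a R) x = fps_of_poly a + x * pev R x"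
  by (simp add: pev_def map_poly_pCons)

lemma pev_0[simp]: "pev 0 x = 0" by (simp add: pev_def)

lemma pev_const[simp]: "pev [:a:] x = fps_of_poly a" by simp

lemma pev_1[simp]: "pev 1 x = 1" by (simp add: one_pCons)

lemma pev_X[simp]: "pev [:0,1:] x = x" by simp

lemma pev_add[simp]: "pev (R + S) x = pev R x + pev S x"
proof (induction R arbitrary: S)
  case 0 then show ?case by simp
next
  case (pCons a R)
  show ?case proof (cases S)
    case (pCons b q)
    have "pev (q + R) x = pev q x + pev R x" using pCons.IH[of q] by (simp add: add.commute)
    then show ?thesis using pCons by (simp add: fps_of_poly_add algebra_simps)
  qed
qed

lemma pev_smult[simp]: "pev (smult a R) x = fps_of_poly a * pev R x"
  by (induction R) (simp_all add: fps_of_poly_mult algebra_simps)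

lemma pev_mult[simp]: "pev (R * S) x = pev R x * pev S x"
  by (induction R) (simp_all add: algebra_simps)

lemma pev_minus[simp]: "pev (- R) x = - pev R x"
proof -
  have "pev (- R) x + pev R x = 0" by (simp flip: pev_add)
  then show ?thesis by (simp add: eq_neg_iff_add_eq_0)
qed

lemma pev_diff[simp]: "pev (R - S) x = pev R x - pev S x"
  using pev_add[of R "-S" x] by simp

lemma pev_sum: "pev (\<Sum>i\<in>A. R i) x = (\<Sum>i\<in>A. pev (R i) x)"
  by (induction A rule: infinite_finite_induct) simp_all

lemma pev_monom: "pev (monom c n) x = fps_of_poly c * x ^ n"
  by (simp add: pev_def map_poly_monom poly_monom)

lemma pev_power[simp]: "pev (R ^ n) x = pev R x ^ n"
  by (induction n) simp_all

lemma pev_deriv: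
  "fps_deriv (pev R x) = pev (map_poly pderiv R) x + pev (pderiv R) x * fps_deriv x"
proof (induction R)
  case 0 then show ?case by simp
next
  case (pCons a R)
  have m: "map_poly pderiv (pCons a R) = pCons (pderiv a) (map_poly pderiv R)"
    by (simp add: map_poly_pCons)
  show ?case
    by (simp add: m pderiv_pCons pCons fps_of_poly_pderiv algebra_simps)
qed



lemma lin_dep:
  fixes U :: "nat \<Rightarrow> 'r::idom poly"
  assumes "finite I" "card I > n" "\<forall>i\<in>I. \<forall>k\<ge>n. coeff (U i) k = 0"
  shows "\<exists>c. (\<exists>i\<in>I. c i \<noteq> 0) \<and> (\<Sum>i\<in>I. smult (c i) (U i)) = 0"
  using assms
proof (induction n arbitrary: I U)
  case 0
  then have "I \<noteq> {}" by auto
  moreover have "\<forall>i\<in>I. U i = 0" using 0 by (auto intro: poly_eqI)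
  ultimately show ?case by (intro exI[of _ "\<lambda>_. 1"]) auto
next
  case (Suc n)
  show ?case
  proof (cases "\<forall>i\<in>I. coeff (U i) n = 0")
    case True
    have "\<forall>i\<in>I. \<forall>k\<ge>n. coeff (U i) k = 0"
      using True Suc.prems(3) by (metis Suc_leI le_neq_implies_less)
    then show ?thesis using Suc.IH[of I U] Suc.prems by auto
  next
    case False
    then obtain j where j: "j \<in> I" "coeff (U j) n \<noteq> 0" by auto
    define aj where "aj = coeff (U j) n"
    define I' where "I' = I - {j}"
    define V where "V i = smult aj (U i) - smult (coeff (U i) n) (U j)" for i
    have fI': "finite I'" using Suc.prems I'_def by auto
    have cI': "card I' > n" using Suc.prems j I'_def by auto
    have "\<forall>i\<in>I'. \<forall>k\<ge>n. coeff (V i) k = 0"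
    proof (intro ballI allI impI)
      fix i k assume i: "i \<in> I'" and k: "n \<le> k"
      show "coeff (V i) k = 0"
      proof (cases "k = n")
        case True then show ?thesis by (simp add: V_def aj_def)
      next
        case False
        then have "Suc n \<le> k" using k by auto
        then show ?thesis using Suc.prems(3) i j I'_def by (simp add: V_def)
      qed
    qed
    from Suc.IH[OF fI' cI' this] obtain c' where
      c': "\<exists>i\<in>I'. c' i \<noteq> 0" "(\<Sum>i\<in>I'. smult (c' i) (V i)) = 0" by blast
    define c where "c i = (if i = j then - (\<Sum>l\<in>I'. c' l * coeff (U l) n) else c' i * aj)" for i
    have "(\<Sum>i\<in>I. smult (c i) (U i)) = smult (c j) (U j) + (\<Sum>i\<in>I'. smult (c i) (U i))"
      using Suc.prems(1) j by (simp add: I'_def sum.remove)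
    also have "(\<Sum>i\<in>I'. smult (c i) (U i)) = (\<Sum>i\<in>I'. smult (c' i * aj) (U i))"
      by (rule sum.cong) (auto simp: c_def I'_def)
    also have "\<dots> = (\<Sum>i\<in>I'. smult (c' i) (V i)) + (\<Sum>i\<in>I'. smult (c' i * coeff (U i) n) (U j))"
      by (simp add: V_def smult_diff_right sum.distrib[symmetric] algebra_simps)
    also have "(\<Sum>i\<in>I'. smult (c' i * coeff (U i) n) (U j)) = smult (\<Sum>i\<in>I'. c' i * coeff (U i) n) (U j)"
      by (simp add: smult_sum)
    finally have "(\<Sum>i\<in>I. smult (c i) (U i)) = 0" using c'(2) by (simp add: c_def)
    moreover obtain i0 where "i0 \<in> I'" "c' i0 \<noteq> 0" using c' by blast
    then have "i0 \<in> I" "c i0 \<noteq> 0" using j by (auto simp: c_def I'_def aj_def)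
    ultimately show ?thesis by blast
  qed
qed



lemma fps_of_poly_of_nat[simp]: "fps_of_poly (of_nat n :: rat poly) = of_nat n"
  by (induction n) (simp_all add: fps_of_poly_add)

lemma alg_ode:
  assumes Q: "Q \<noteq> 0" "pev Q f = 0"
  shows "\<exists>s c. (\<exists>k\<le>s. c k \<noteq> (0::rat poly)) \<and> (\<Sum>k\<le>s. fps_of_poly (c k) * (fps_deriv ^^ k) f) = 0"
proof -
  obtain Q0 where Q0: "Q0 \<noteq> 0" "pev Q0 f = 0"
    and minQ: "\<And>R. R \<noteq> 0 \<Longrightarrow> pev R f = 0 \<Longrightarrow> degree Q0 \<le> degree R"
    using ex_has_least_nat[of "\<lambda>R. R \<noteq> 0 \<and> pev R f = 0" Q degree] Q by blast
  define d where "d = degree Q0"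
  have d1: "d \<ge> 1"
  proof (rule ccontr)
    assume "\<not> d \<ge> 1"
    then have "degree Q0 = 0" by (simp add: d_def)
    then obtain a where a: "Q0 = [:a:]" using degree0_coeffs by blast
    then have "a \<noteq> 0" using Q0 by auto
    then have "fps_of_poly a \<noteq> 0" by (metis fps_of_poly_0 fps_of_poly_eq_iff)
    then show False using Q0 a by simp
  qed
  define Qd where "Qd = pderiv Q0"
  define Qx where "Qx = map_poly pderiv Q0"
  define g where "g = pev Qd f"
  have "Qd \<noteq> 0" using d1 by (simp add: Qd_def pderiv_eq_0_iff d_def)
  moreover have "degree Qd < degree Q0" using d1 by (simp add: Qd_def degree_pderiv d_def)
  ultimately have g0: "g \<noteq> 0" using minQ unfolding g_def by force
  have "fps_deriv (pev Q0 f) = 0" using Q0 by simp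
  then have key1: "g * fps_deriv f = - pev Qx f"
    unfolding pev_deriv g_def Qd_def Qx_def by (simp add: eq_neg_iff_add_eq_0 add.commute)
  define Pd where "Pd = pderiv Qd"
  define Px where "Px = map_poly pderiv Qd"
  have key2: "g * fps_deriv g = g * pev Px f - pev Pd f * pev Qx f"
  proof -
    have "g * fps_deriv g = g * pev Px f + pev Pd f * (g * fps_deriv f)"
      unfolding g_def pev_deriv Pd_def Px_def by (simp add: algebra_simps)
    then show ?thesis using key1 by simp
  qed
  have claim: "\<exists>R. g ^ (2 * k) * (fps_deriv ^^ k) f = pev R f" for k
  proof (induction k)
    case 0
    then show ?case by (intro exI[of _ "[:0,1:]"]) simp
  next
    case (Suc k)
    then obtain R where R: "g ^ (2 * k) * (fps_deriv ^^ k) f = pev R f" by blast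
    define h where "h = (fps_deriv ^^ k) f"
    have dE: "fps_deriv (pev R f) = fps_deriv (g ^ (2 * k)) * h + g ^ (2 * k) * fps_deriv h"
      using R h_def by (metis fps_deriv_mult add.commute mult.commute)
    have pw: "g^2 * fps_deriv (g ^ (2 * k)) = of_nat (2 * k) * (g * fps_deriv g) * g ^ (2 * k)"
    proof (cases k)
      case 0 then show ?thesis by simp
    next
      case (Suc k')
      have "g ^ (2 * k) = g * g ^ (2 * k - 1)" using Suc by (simp add: power_eq_if)
      then show ?thesis unfolding fps_deriv_power' by (simp add: power2_eq_square algebra_simps)
    qed
    have "g ^ (2 * Suc k) * (fps_deriv ^^ Suc k) f
        = g^2 * fps_deriv (pev R f) - g^2 * fps_deriv (g ^ (2 * k)) * h"
      unfolding dE by (simp add: h_def power_add power2_eq_square algebra_simps)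
    also have "\<dots> = g^2 * pev (map_poly pderiv R) f + g * pev (pderiv R) f * (g * fps_deriv f)
                   - of_nat (2 * k) * (g * fps_deriv g) * pev R f"
      unfolding pw pev_deriv using R h_def by (simp add: power2_eq_square algebra_simps)
    also have "\<dots> = pev (Qd^2 * map_poly pderiv R - Qd * pderiv R * Qx
                   - smult (of_nat (2 * k)) (Qd * Px - Pd * Qx) * R) f"
      unfolding key1 key2 by (simp add: g_def fps_of_poly_simps algebra_simps)
    finally show ?case by blast
  qed
  then obtain R where R: "\<And>k. g ^ (2 * k) * (fps_deriv ^^ k) f = pev (R k) f" by metis
  define L where "L = lead_coeff Q0"
  have L0: "L \<noteq> 0" using Q0 by (simp add: L_def)
  have red: "\<exists>e T. (\<forall>j\<ge>d. coeff T j = 0) \<and> fps_of_poly (L ^ e) * pev S f = pev T f" for S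
  proof -
    define e where "e = Suc (degree S) - degree Q0"
    obtain q where q: "smult (L ^ e) S = Q0 * q + pseudo_mod S Q0"
      using pseudo_divmod[OF Q0(1), of S "fst (pseudo_divmod S Q0)" "pseudo_mod S Q0"]
      by (auto simp: pseudo_mod_def L_def e_def)
    have "pseudo_mod S Q0 = 0 \<or> degree (pseudo_mod S Q0) < d"
      using pseudo_mod(2)[OF Q0(1)] by (simp add: d_def)
    then have "\<forall>j\<ge>d. coeff (pseudo_mod S Q0) j = 0"
      by (auto intro: coeff_eq_0)
    moreover have "fps_of_poly (L ^ e) * pev S f = pev (pseudo_mod S Q0) f"
      using arg_cong[OF q, of "\<lambda>R. pev R f"] Q0(2) by simp
    ultimately show ?thesis by blast
  qed
  have "\<forall>k. \<exists>e T. (\<forall>j\<ge>d. coeff T j = 0) \<and>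
          fps_of_poly (L ^ e) * pev (Qd ^ (2 * (d - k)) * R k) f = pev T f"
    using red by blast
  then obtain e T where eT: "\<And>k. \<forall>j\<ge>d. coeff (T k) j = 0"
    "\<And>k. fps_of_poly (L ^ e k) * pev (Qd ^ (2 * (d - k)) * R k) f = pev (T k) f"
    by metis
  define E where "E = Max (e ` {..d})"
  define T' where "T' k = smult (L ^ (E - e k)) (T k)" for k
  define M where "M = fps_of_poly (L ^ E) * g ^ (2 * d)"
  have MT: "M * (fps_deriv ^^ k) f = pev (T' k) f" if "k \<le> d" for k
  proof -
    have "e k \<le> E" using that by (simp add: E_def)
    then have LE: "L ^ E = L ^ (E - e k) * L ^ e k" by (simp flip: power_add)
    have "2 * d = 2 * (d - k) + 2 * k" using that by simp
    then have "g ^ (2 * d) = g ^ (2 * (d - k)) * g ^ (2 * k)"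
      by (metis power_add)
    then have "M * (fps_deriv ^^ k) f
       = fps_of_poly (L ^ (E - e k)) * (fps_of_poly (L ^ e k) * pev (Qd ^ (2 * (d - k)) * R k) f)"
      unfolding M_def LE using R[of k] by (simp add: g_def fps_of_poly_mult algebra_simps)
    then show ?thesis using eT(2)[of k] by (simp add: T'_def)
  qed
  have "\<forall>i\<in>{..d}. \<forall>j\<ge>d. coeff (T' i) j = 0" using eT(1) by (simp add: T'_def)
  from lin_dep[OF _ _ this] obtain c where
    c: "\<exists>i\<in>{..d}. c i \<noteq> 0" "(\<Sum>i\<le>d. smult (c i) (T' i)) = 0" by auto
  have "M * (\<Sum>k\<le>d. fps_of_poly (c k) * (fps_deriv ^^ k) f) = pev (\<Sum>i\<le>d. smult (c i) (T' i)) f"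
    unfolding pev_sum sum_distrib_left
    by (rule sum.cong) (auto simp: MT[symmetric] mult.left_commute)
  also have "\<dots> = 0" using c by simp
  finally have "M * (\<Sum>k\<le>d. fps_of_poly (c k) * (fps_deriv ^^ k) f) = 0" .
  moreover have "M \<noteq> 0" using g0 L0 unfolding M_def
    by (metis fps_of_poly_0 fps_of_poly_eq_iff mult_eq_0_iff power_not_zero)
  ultimately have "(\<Sum>k\<le>d. fps_of_poly (c k) * (fps_deriv ^^ k) f) = 0" by simp
  then show ?thesis using c by blast
qed



lemma deriv_pow_nth:
  "((fps_deriv ^^ k) (f :: 'a::comm_semiring_1 fps)) $ i = pochhammer (of_nat i + 1) k * f $ (i + k)"
proof (induction k arbitrary: i)
  case 0 then show ?case by simp
next
  case (Suc k)
  show ?case by (simp add: Suc pochhammer_rec algebra_simps)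
qed

lemma poch_lim1:
  "(\<lambda>n. pochhammer (real (n - j) + 1) k / real n ^ k) \<longlonglongrightarrow> 1"
proof -
  have ev: "eventually (\<lambda>n. (\<Prod>i\<in>{0..<k}. 1 + (1 + real i - real j) / real n)
        = pochhammer (real (n - j) + 1) k / real n ^ k) sequentially"
    using eventually_ge_at_top[of "Suc j"]
  proof eventually_elim
    case (elim n)
    then have n0: "real n \<noteq> 0" by simp
    have "pochhammer (real (n - j) + 1) k / real n ^ k = (\<Prod>i\<in>{0..<k}. (real (n - j) + 1 + real i) / real n)"
      unfolding pochhammer_prod by (simp add: prod_dividef)
    also have "\<dots> = (\<Prod>i\<in>{0..<k}. 1 + (1 + real i - real j) / real n)"
      proof (intro prod.cong refl)
      fix i assume "i \<in> {0..<k}"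
      have "real (n - j) = real n - real j" using elim by (simp add: of_nat_diff)
      then show "(real (n - j) + 1 + real i) / real n = 1 + (1 + real i - real j) / real n"
        using n0 by (simp add: divide_simps)
    qed
    finally show ?case by simp
  qed
  have "(\<lambda>n. \<Prod>i\<in>{0..<k}. 1 + (1 + real i - real j) / real n) \<longlonglongrightarrow> (\<Prod>i\<in>{0..<k}. 1 + 0)"
    by (intro tendsto_prod tendsto_add tendsto_const lim_const_over_n)
  then show ?thesis using tendsto_cong[OF ev] by simp
qed

lemma poch_lim:
  assumes "k \<le> D"
  shows "(\<lambda>n. pochhammer (real (n - j) + 1) k / real n ^ D) \<longlonglongrightarrow> (if k = D then 1 else 0)"
proof (cases "k = D")
  case True then show ?thesis using poch_lim1 by simp
next
  case False
  define m where "m = D - k - 1"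
  have m: "D = k + Suc m" using assms False by (simp add: m_def)
  have "(\<lambda>n. pochhammer (real (n - j) + 1) k / real n ^ k * inverse (real n) ^ Suc m) \<longlonglongrightarrow> 1 * 0 ^ Suc m"
    by (intro tendsto_mult poch_lim1 tendsto_power lim_inverse_n)
  moreover have "pochhammer (real (n - j) + 1) k / real n ^ k * inverse (real n) ^ Suc m
      = pochhammer (real (n - j) + 1) k / real n ^ D" for n
    by (simp add: m power_add divide_inverse power_inverse)
  ultimately show ?thesis using False by simp
qed

lemma lim0_finite:
  fixes X :: "nat \<Rightarrow> real"
  assumes "X \<longlonglongrightarrow> 0" "finite F" "eventually (\<lambda>n. X n \<in> F) sequentially"
  shows "eventually (\<lambda>n. X n = 0) sequentially"
proof (cases "F - {0} = {}")
  case True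
  then show ?thesis using assms(3) by (auto elim: eventually_mono)
next
  case False
  define \<delta> where "\<delta> = Min (abs ` (F - {0}))"
  have fin: "finite (abs ` (F - {0}))" using assms(2) by simp
  have ne: "abs ` (F - {0}) \<noteq> {}" using False by simp
  have dpos: "\<delta> > 0" unfolding \<delta>_def Min_gr_iff[OF fin ne] by auto
  have "eventually (\<lambda>n. dist (X n) 0 < \<delta>) sequentially" using tendstoD[OF assms(1) dpos] .
  with assms(3) show ?thesis
  proof eventually_elim
    case (elim n)
    show ?case
    proof (rule ccontr)
      assume "X n \<noteq> 0"
      then have "\<delta> \<le> abs (X n)" unfolding \<delta>_def using fin elim by (intro Min_le) auto
      then show False using elim by simp
    qed
  qed
qed



lemma of_rat_poch: "(of_rat (pochhammer (of_nat m + 1) k) :: real) = pochhammer (real m + 1) k"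
proof -
  have "(pochhammer (of_nat m + 1) k :: rat) = of_nat (pochhammer (m+1) k)"
    using pochhammer_of_nat[of "m+1" k] by (simp add: add.commute)
  moreover have "(pochhammer (real m + 1) k) = of_nat (pochhammer (m+1) k)"
    using pochhammer_of_nat[of "m+1" k] by (simp add: add.commute)
  ultimately show ?thesis by simp
qed

lemma ode_rec:
  fixes f :: "rat fps" and c :: "nat \<Rightarrow> rat poly"
  assumes fin: "finite S" and vals: "\<forall>n\<ge>1. f $ n \<in> S"
    and c: "\<exists>k\<le>s. c k \<noteq> 0" and ode: "(\<Sum>k\<le>s. fps_of_poly (c k) * (fps_deriv ^^ k) f) = 0"
  shows "\<exists>e. e \<noteq> 0 \<and> (\<exists>N. \<forall>n\<ge>N. (fps_of_poly e * f) $ n = 0)"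
proof -
  define K where "K = {k. k \<le> s \<and> c k \<noteq> 0}"
  define D where "D = Max K"
  have finK: "finite K" by (simp add: K_def)
  have neK: "K \<noteq> {}" using c by (auto simp: K_def)
  have DK: "D \<in> K" using Max_in[OF finK neK] by (simp add: D_def)
  then have Ds: "D \<le> s" and cD: "c D \<noteq> 0" by (auto simp: K_def)
  have kD: "k \<le> D" if "k \<le> s" "c k \<noteq> 0" for k
    using Max_ge[OF finK, of k] that by (simp add: K_def D_def)
  define G where "G = Max ((\<lambda>k. degree (c k)) ` {..s})"
  have cG: "coeff (c k) j = 0" if "k \<le> s" "G < j" for k j
  proof -
    have "degree (c k) \<le> G" unfolding G_def using that by (intro Max_ge) auto
    then show ?thesis using that by (intro coeff_eq_0) simp
  qed
  have ident: "(\<Sum>k\<le>s. \<Sum>j\<le>G. coeff (c k) j * pochhammer (of_nat (n - j) + 1) k * f $ (n - j + k)) = 0"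
    if nG: "n \<ge> G" for n
  proof -
    have "0 = (\<Sum>k\<le>s. fps_of_poly (c k) * (fps_deriv ^^ k) f) $ n" using ode by simp
    also have "\<dots> = (\<Sum>k\<le>s. \<Sum>i=0..n. coeff (c k) i * ((fps_deriv ^^ k) f) $ (n - i))"
      by (simp add: fps_sum_nth fps_mult_nth)
    also have "\<dots> = (\<Sum>k\<le>s. \<Sum>j\<le>G. coeff (c k) j * ((fps_deriv ^^ k) f) $ (n - j))"
    proof (rule sum.cong[OF refl])
      fix k assume k: "k \<in> {..s}"
      show "(\<Sum>i=0..n. coeff (c k) i * ((fps_deriv ^^ k) f) $ (n - i))
          = (\<Sum>j\<le>G. coeff (c k) j * ((fps_deriv ^^ k) f) $ (n - j))"
        by (rule sum.mono_neutral_right) (use nG k cG in auto)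
    qed
    also have "\<dots> = (\<Sum>k\<le>s. \<Sum>j\<le>G. coeff (c k) j * pochhammer (of_nat (n - j) + 1) k * f $ (n - j + k))"
      by (simp add: deriv_pow_nth mult.assoc)
    finally show ?thesis by simp
  qed
  define r :: "rat \<Rightarrow> real" where "r = of_rat"
  define A where "A n = (\<Sum>j\<le>G. r (coeff (c D) j) * r (f $ (n - j + D)))" for n
  define t where "t k j n = r (coeff (c k) j) * (pochhammer (real (n - j) + 1) k / real n ^ D
      - (if k = D then 1 else 0)) * r (f $ (n - j + k))" for k j n
  have At: "A n = - (\<Sum>k\<le>s. \<Sum>j\<le>G. t k j n)" if n: "n \<ge> G" "n \<ge> 1" for n
  proof -
    have "(\<Sum>k\<le>s. \<Sum>j\<le>G. r (coeff (c k) j) * (pochhammer (real (n - j) + 1) k / real n ^ D) * r (f $ (n - j + k)))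
        = r (\<Sum>k\<le>s. \<Sum>j\<le>G. coeff (c k) j * pochhammer (of_nat (n - j) + 1) k * f $ (n - j + k)) / real n ^ D"
      by (simp add: r_def of_rat_sum of_rat_mult of_rat_poch sum_divide_distrib)
    also have "\<dots> = 0" using ident[OF n(1)] by (simp add: r_def)
    finally have z: "(\<Sum>k\<le>s. \<Sum>j\<le>G. r (coeff (c k) j) * (pochhammer (real (n - j) + 1) k / real n ^ D) * r (f $ (n - j + k))) = 0" .
    have "(\<Sum>k\<le>s. \<Sum>j\<le>G. r (coeff (c k) j) * (if k = D then 1 else 0) * r (f $ (n - j + k)))
        = (\<Sum>k\<le>s. if k = D then A n else 0)"
      by (rule sum.cong) (auto simp: A_def)
    also have "\<dots> = A n" using Ds by simp
    finally have a: "(\<Sum>k\<le>s. \<Sum>j\<le>G. r (coeff (c k) j) * (if k = D then 1 else 0) * r (f $ (n - j + k))) = A n" .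
    have "(\<Sum>k\<le>s. \<Sum>j\<le>G. t k j n)
      = (\<Sum>k\<le>s. \<Sum>j\<le>G. r (coeff (c k) j) * (pochhammer (real (n - j) + 1) k / real n ^ D) * r (f $ (n - j + k)))
        - (\<Sum>k\<le>s. \<Sum>j\<le>G. r (coeff (c k) j) * (if k = D then 1 else 0) * r (f $ (n - j + k)))"
      unfolding t_def by (simp add: sum_subtractf algebra_simps)
    then show ?thesis using z a by simp
  qed
  define V where "V = insert (f $ 0) S"
  have finV: "finite V" using fin by (simp add: V_def)
  have fV: "f $ i \<in> V" for i using vals by (cases i) (auto simp: V_def)
  define Kb where "Kb = Max (abs ` r ` V)"
  have Kb: "abs (r (f $ i)) \<le> Kb" for i
    unfolding Kb_def using finV fV by (intro Max_ge) auto
  have tl: "(t k j) \<longlonglongrightarrow> 0" if k: "k \<le> s" for k j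
  proof (cases "c k = 0")
    case True
    then have "t k j = (\<lambda>n. 0)" by (intro ext) (simp add: t_def r_def)
    then show ?thesis by simp
  next
    case False
    then have kD': "k \<le> D" using kD k by simp
    have "(\<lambda>n. r (coeff (c k) j) * (pochhammer (real (n - j) + 1) k / real n ^ D - (if k = D then 1 else 0)))
        \<longlonglongrightarrow> r (coeff (c k) j) * ((if k = D then 1 else 0) - (if k = D then 1 else 0))"
      by (intro tendsto_mult tendsto_diff tendsto_const poch_lim kD')
    then have l0: "(\<lambda>n. r (coeff (c k) j) * (pochhammer (real (n - j) + 1) k / real n ^ D - (if k = D then 1 else 0)))
        \<longlonglongrightarrow> 0" by simp
    show ?thesis
    proof (rule tendsto_0_le[OF l0, of _ Kb], rule always_eventually, rule allI)
      fix n
      show "norm (t k j n) \<le> norm (r (coeff (c k) j) * (pochhammer (real (n - j) + 1) k / real n ^ D - (if k = D then 1 else 0))) * Kb"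
        unfolding t_def norm_mult using Kb[of "n - j + k"]
        by (intro mult_left_mono) auto
    qed
  qed
  have "(\<lambda>n. \<Sum>k\<le>s. \<Sum>j\<le>G. t k j n) \<longlonglongrightarrow> 0"
    by (intro tendsto_null_sum) (use tl in auto)
  then have "(\<lambda>n. - (\<Sum>k\<le>s. \<Sum>j\<le>G. t k j n)) \<longlonglongrightarrow> - 0" by (rule tendsto_minus)
  moreover have "eventually (\<lambda>n. - (\<Sum>k\<le>s. \<Sum>j\<le>G. t k j n) = A n) sequentially"
    using eventually_ge_at_top[of "Suc G"] by eventually_elim (simp add: At)
  ultimately have Al: "A \<longlonglongrightarrow> 0" using tendsto_cong by force
  define F where "F = (\<lambda>w. \<Sum>j\<le>G. r (coeff (c D) j) * r (w j)) ` (PiE {..G} (\<lambda>_. S))"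
  have finF: "finite F" unfolding F_def using fin by (intro finite_imageI finite_PiE) auto
  have "eventually (\<lambda>n. A n \<in> F) sequentially"
    using eventually_ge_at_top[of "Suc G"]
  proof eventually_elim
    case (elim n)
    define w where "w = restrict (\<lambda>j. f $ (n - j + D)) {..G}"
    have "w \<in> PiE {..G} (\<lambda>_. S)" unfolding w_def using vals elim by auto
    moreover have "A n = (\<Sum>j\<le>G. r (coeff (c D) j) * r (w j))"
      unfolding A_def w_def by (rule sum.cong) auto
    ultimately show ?case unfolding F_def by blast
  qed
  from lim0_finite[OF Al finF this] obtain N0 where N0: "\<And>n. n \<ge> N0 \<Longrightarrow> A n = 0"
    by (auto simp: eventually_sequentially)
  have "(fps_of_poly (c D) * f) $ m = 0" if m: "m \<ge> N0 + G + D" for m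
  proof -
    define n where "n = m - D"
    have n: "n \<ge> N0" "n \<ge> G" "m = n + D" using m by (auto simp: n_def)
    have "(fps_of_poly (c D) * f) $ m = (\<Sum>i=0..m. coeff (c D) i * f $ (m - i))"
      by (simp add: fps_mult_nth)
    also have "\<dots> = (\<Sum>j\<le>G. coeff (c D) j * f $ (m - j))"
      by (rule sum.mono_neutral_right) (use n Ds cG in auto)
    also have "\<dots> = (\<Sum>j\<le>G. coeff (c D) j * f $ (n - j + D))"
      by (rule sum.cong) (use n in auto)
    finally have eq: "(fps_of_poly (c D) * f) $ m = (\<Sum>j\<le>G. coeff (c D) j * f $ (n - j + D))" .
    have "r (\<Sum>j\<le>G. coeff (c D) j * f $ (n - j + D)) = A n"
      by (simp add: A_def r_def of_rat_sum of_rat_mult)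
    then show ?thesis using eq N0[OF n(1)] by (simp add: r_def)
  qed
  then show ?thesis using cD by blast
qed



lemma rec_periodic:
  fixes f :: "rat fps" and e :: "rat poly"
  assumes fin: "finite S" and vals: "\<forall>n\<ge>1. f $ n \<in> S" and e0: "e \<noteq> 0"
    and rec: "\<forall>n\<ge>N. (fps_of_poly e * f) $ n = 0"
  shows "eventually_periodic (\<lambda>n. f $ n)"
proof -
  define dg where "dg = degree e"
  have ex: "\<exists>j. coeff e j \<noteq> 0" using e0 by (metis leading_coeff_0_iff)
  define j0 where "j0 = (LEAST j. coeff e j \<noteq> 0)"
  have cj0: "coeff e j0 \<noteq> 0" unfolding j0_def using LeastI_ex[OF ex] .
  have lt: "coeff e j = 0" if "j < j0" for j using not_less_Least[of j "\<lambda>j. coeff e j \<noteq> 0"] that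
    by (auto simp: j0_def)
  have j0dg: "j0 \<le> dg" unfolding dg_def using cj0 le_degree by blast
  define r where "r = dg - j0"
  define e0' where "e0' = coeff e j0"
  define \<Phi> where "\<Phi> w = - (1 / e0') * (\<Sum>i=Suc j0..dg. coeff e i * w (dg - i))" for w :: "nat \<Rightarrow> rat"
  define W where "W m = restrict (\<lambda>l. f $ (m + l)) {..<r}" for m
  define M where "M = N + 1"
  have step: "f $ (m + r) = \<Phi> (W m)" if m: "m \<ge> M" for m
  proof -
    have "0 = (fps_of_poly e * f) $ (m + dg)" using rec m by (auto simp: M_def)
    also have "\<dots> = (\<Sum>i=0..m+dg. coeff e i * f $ (m + dg - i))" by (simp add: fps_mult_nth)
    also have "\<dots> = (\<Sum>i=j0..dg. coeff e i * f $ (m + dg - i))"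
    proof (rule sum.mono_neutral_right)
      show "\<forall>i\<in>{0..m + dg} - {j0..dg}. coeff e i * f $ (m + dg - i) = 0"
      proof
        fix i assume i: "i \<in> {0..m + dg} - {j0..dg}"
        then have "i < j0 \<or> i > dg" by auto
        then have "coeff e i = 0" using lt by (auto simp: dg_def coeff_eq_0)
        then show "coeff e i * f $ (m + dg - i) = 0" by simp
      qed
    qed auto
    also have "\<dots> = e0' * f $ (m + r) + (\<Sum>i=Suc j0..dg. coeff e i * f $ (m + dg - i))"
      using j0dg by (simp add: sum.atLeast_Suc_atMost e0'_def r_def)
    also have "(\<Sum>i=Suc j0..dg. coeff e i * f $ (m + dg - i)) = (\<Sum>i=Suc j0..dg. coeff e i * W m (dg - i))"
      by (rule sum.cong) (auto simp: W_def r_def)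
    finally have "e0' * f $ (m + r) = - (\<Sum>i=Suc j0..dg. coeff e i * W m (dg - i))"
      by (simp add: eq_neg_iff_add_eq_0)
    then show ?thesis using cj0 by (simp add: \<Phi>_def e0'_def field_simps)
  qed
  define \<Psi> where "\<Psi> w = restrict (\<lambda>l. if Suc l < r then w (Suc l) else \<Phi> w) {..<r}" for w
  have WS: "W (Suc m) = \<Psi> (W m)" if "m \<ge> M" for m
  proof (rule ext)
    fix l
    show "W (Suc m) l = \<Psi> (W m) l"
    proof (cases "l < r")
      case True
      show ?thesis
      proof (cases "Suc l < r")
        case True then show ?thesis by (simp add: W_def \<Psi>_def)
      next
        case False
        then have e: "Suc m + l = m + r" using \<open>l < r\<close> by simp
        have "W (Suc m) l = f $ (Suc m + l)" using \<open>l < r\<close> by (simp add: W_def)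
        also have "\<dots> = f $ (m + r)" by (simp only: e)
        also have "\<dots> = \<Psi> (W m) l" using False \<open>l < r\<close> step[OF that] by (simp add: \<Psi>_def)
        finally show ?thesis .
      qed
    qed (simp add: W_def \<Psi>_def)
  qed
  have Win: "W m \<in> PiE {..<r} (\<lambda>_. S)" if "m \<ge> M" for m
    using that vals by (auto simp: W_def M_def)
  have "\<not> inj_on W {M..}"
  proof
    assume "inj_on W {M..}"
    moreover have "W ` {M..} \<subseteq> PiE {..<r} (\<lambda>_. S)" using Win by auto
    moreover have "finite (PiE {..<r} (\<lambda>_. S))" using fin by (intro finite_PiE) auto
    ultimately have "finite {M..}" using inj_on_finite by blast
    then show False using infinite_Ici[of M] by simp
  qed
  then obtain p q where pq: "p \<ge> M" "q \<ge> M" "p \<noteq> q" "W p = W q" unfolding inj_on_def by auto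
  obtain p' q' where pq': "p' \<ge> M" "p' < q'" "W p' = W q'"
    using pq by (metis linorder_neqE_nat le_less_trans less_imp_le)
  have Wt: "W (p' + t) = W (q' + t)" for t
  proof (induction t)
    case 0 then show ?case using pq' by simp
  next
    case (Suc t)
    have "W (Suc (p' + t)) = \<Psi> (W (p' + t))" using pq' by (intro WS) auto
    moreover have "W (Suc (q' + t)) = \<Psi> (W (q' + t))" using pq' by (intro WS) auto
    ultimately show ?case using Suc by simp
  qed
  have "f $ (n + (q' - p')) = f $ n" if n: "n \<ge> p' + r" for n
  proof -
    define t where "t = n - p' - r"
    have "f $ (p' + t + r) = \<Phi> (W (p' + t))" using pq' by (intro step) auto
    moreover have "f $ (q' + t + r) = \<Phi> (W (q' + t))" using pq' by (intro step) auto
    moreover have "n = p' + t + r" "n + (q' - p') = q' + t + r" using n pq' by (auto simp: t_def)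
    ultimately show ?thesis using Wt by (metis)
  qed
  then show ?thesis unfolding eventually_periodic_def
    using pq' by (intro exI[of _ "p' + r"] exI[of _ "q' - p'"]) auto
qed



lemma alg_periodic:
  fixes f :: "rat fps"
  assumes "finite S" "\<forall>n\<ge>1. f $ n \<in> S" "Q \<noteq> 0" "pev Q f = 0"
  shows "eventually_periodic (\<lambda>n. f $ n)"
proof -
  obtain s c where "\<exists>k\<le>s. c k \<noteq> (0::rat poly)" "(\<Sum>k\<le>s. fps_of_poly (c k) * (fps_deriv ^^ k) f) = 0"
    using alg_ode[OF assms(3,4)] by blast
  from ode_rec[OF assms(1,2) this] obtain e N where "e \<noteq> 0" "\<forall>n\<ge>N. (fps_of_poly e * f) $ n = 0"
    by blast
  from rec_periodic[OF assms(1,2) this] show ?thesis .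
qed

lemma periodic_shift:
  assumes "eventually_periodic (\<lambda>n. g n)"
  shows "eventually_periodic (\<lambda>n. g (n + 1))"
proof -
  obtain N d where "d \<ge> 1" "\<forall>n\<ge>N. g (n + d) = g n" using assms by (auto simp: eventually_periodic_def)
  then have "\<forall>n\<ge>N. g (n + 1 + d) = g (n + 1)" by (metis add.commute add.left_commute le_add2 le_trans)
  then show ?thesis unfolding eventually_periodic_def using \<open>d \<ge> 1\<close>
    by (metis add.commute add.left_commute)
qed

lemma pev_as_sum: "pev Q x = (\<Sum>i\<le>degree Q. fps_of_poly (coeff Q i) * x ^ i)"
proof -
  have "pev Q x = pev (\<Sum>i\<le>degree Q. monom (coeff Q i) i) x" by (simp add: poly_as_sum_of_monoms)
  then show ?thesis by (simp add: pev_sum pev_monom)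
qed

theorem mainTheorem8:
  fixes w :: "nat \<Rightarrow> 'a::finite" and a :: 'a and m :: nat
  assumes inf: "infinite {i. w i = a}"
    and fin: "finite {fps_nth ((1 - fps_X) ^ m * occ_series w a) n | n. n \<ge> 1}"
  shows "(eventually_periodic (\<lambda>n. fps_nth ((1 - fps_X) ^ m * occ_series w a) (n + 1))
            \<longrightarrow> rational_fps (occ_series w a))
       \<and> (\<not> eventually_periodic (\<lambda>n. fps_nth ((1 - fps_X) ^ m * occ_series w a) (n + 1))
            \<longrightarrow> transcendental_fps (occ_series w a))"
proof (intro conjI impI)
  define P where "P = occ_series w a"
  define B where "B = (1 - fps_X) ^ m * P"
  define u :: "rat poly" where "u = [:1, -1:]"
  have fu: "fps_of_poly u = 1 - fps_X"
    by (simp add: u_def fps_of_poly_pCons fps_of_poly_const fps_const_neg) 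
  {
    assume per: "eventually_periodic (\<lambda>n. fps_nth ((1 - fps_X) ^ m * occ_series w a) (n + 1))"
    then obtain N d where d: "d \<ge> 1" "\<forall>n\<ge>N. B $ (n + d + 1) = B $ (n + 1)"
      by (auto simp: eventually_periodic_def B_def P_def)
    have Bp: "B $ (n + d) = B $ n" if "n \<ge> N + 1" for n
      using d(2)[rule_format, of "n - 1"] that by simp
    define H where "H = (1 - fps_X ^ d) * B"
    define K where "K = N + 1 + d"
    have H0: "H $ n = 0" if "n \<ge> K" for n
    proof -
      have "H $ n = B $ n - B $ (n - d)" using that d
        by (simp add: H_def algebra_simps fps_X_power_mult_right_nth K_def)
      also have "B $ n = B $ (n - d + d)" using that by (simp add: K_def)
      also have "\<dots> = B $ (n - d)" using that by (intro Bp) (simp add: K_def)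
      finally show ?thesis by simp
    qed
    define p where "p = Poly (map (\<lambda>i. H $ i) [0..<K])"
    have fp: "fps_of_poly p = H"
    proof (rule fps_ext)
      fix n
      show "fps_of_poly p $ n = H $ n"
        by (cases "n < K") (auto simp: p_def nth_default_def H0)
    qed
    define q where "q = (1 - monom 1 d) * u ^ m"
    have fq: "fps_of_poly q = (1 - fps_X ^ d) * (1 - fps_X) ^ m"
      by (simp add: q_def fps_of_poly_mult fps_of_poly_diff fps_of_poly_power fu fps_of_poly_monom')
    have "fps_of_poly q $ 0 = 1" using d unfolding fq by (simp add: fps_mult_nth fps_nth_power_0)
    then have "q \<noteq> 0" by auto
    moreover have "fps_of_poly q * P = fps_of_poly p" unfolding fp fq H_def B_def by (simp add: mult.assoc)
    ultimately show "rational_fps (occ_series w a)" unfolding rational_fps_def P_def by blast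
  }
  {
    assume nper: "\<not> eventually_periodic (\<lambda>n. fps_nth ((1 - fps_X) ^ m * occ_series w a) (n + 1))"
    show "transcendental_fps (occ_series w a)"
      unfolding transcendental_fps_def
    proof
      assume "\<exists>Q :: rat poly poly. Q \<noteq> 0 \<and> poly (map_poly fps_of_poly Q) (occ_series w a) = 0"
      then obtain Q where Q: "Q \<noteq> 0" "pev Q P = 0" by (auto simp: pev_def P_def)
      define d where "d = degree Q"
      define Q' where "Q' = (\<Sum>i\<le>d. monom (coeff Q i * u ^ (m * (d - i))) i)"
      have "coeff Q' d = coeff Q d" unfolding Q'_def by (simp add: coeff_sum)
      then have Q'0: "Q' \<noteq> 0" using Q by (auto simp: d_def)
      have "pev Q' B = (\<Sum>i\<le>d. fps_of_poly (coeff Q i) * (1 - fps_X) ^ (m * (d - i)) * B ^ i)"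
        unfolding Q'_def by (simp add: pev_sum pev_monom fps_of_poly_mult fps_of_poly_power fu)
      also have "\<dots> = (\<Sum>i\<le>d. (1 - fps_X) ^ (m * d) * (fps_of_poly (coeff Q i) * P ^ i))"
      proof (rule sum.cong[OF refl])
        fix i assume "i \<in> {..d}"
        then have "m * d = m * (d - i) + m * i" by (simp add: algebra_simps flip: add_mult_distrib2)
        then have "(1 - fps_X :: rat fps) ^ (m * d) = (1 - fps_X) ^ (m * (d - i)) * (1 - fps_X) ^ (m * i)"
          by (metis power_add)
        then show "fps_of_poly (coeff Q i) * (1 - fps_X) ^ (m * (d - i)) * B ^ i
            = (1 - fps_X) ^ (m * d) * (fps_of_poly (coeff Q i) * P ^ i)"
        proof -
          have e1: "B ^ i = (1 - fps_X) ^ (m * i) * P ^ i"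
            unfolding B_def by (simp only: power_mult_distrib power_mult)
          have "fps_of_poly (coeff Q i) * (1 - fps_X) ^ (m * (d - i)) * ((1 - fps_X) ^ (m * i) * P ^ i)
              = ((1 - fps_X) ^ (m * (d - i)) * (1 - fps_X) ^ (m * i)) * (fps_of_poly (coeff Q i) * P ^ i)"
            by (simp only: mult_ac)
          then show ?thesis using e1 \<open>(1 - fps_X :: rat fps) ^ (m * d) = _\<close> by simp
        qed
      qed
      also have "\<dots> = (1 - fps_X) ^ (m * d) * pev Q P"
        by (simp add: pev_as_sum sum_distrib_left d_def)
      also have "\<dots> = 0" using Q by simp
      finally have QB: "pev Q' B = 0" .
      have "eventually_periodic (\<lambda>n. B $ n)"
        using alg_periodic[OF fin[folded P_def, folded B_def] _ Q'0 QB] by blast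
      then have "eventually_periodic (\<lambda>n. B $ (n + 1))" by (rule periodic_shift)
      then show False using nper by (simp add: B_def P_def)
    qed
  }
qed

end
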